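(* Let $t,k,\ell$ be positive integers with $t<k$, let $\mathbb{F}$ be a finite field, and let $b$ be an integer with $b>\ell/k$. There is a black-box transformation with parameters $(t,k,k_0=\binom{k}{t},\ell,\mathbb{F})$ whose associated LMSSS $\mathcal{L}$ has every party's share in $\mathbb{F}^b$ (hence information rate $\ell/(kb)$) if and only if there is an $\mathbb{F}$-linear code $C\subseteq(\mathbb{F}^b)^k$ with rate at least $\ell/(kb)$ and distance at least $t+1$. Moreover, in the "if" direction the transformation can be chosen with $c_j=\ell\binom{k-1}{t}$ for every $j\in[k]$.
   Context: A $k$-party $\ell$-LMSSS over $\mathbb{F}$: an $\mathbb{F}$-linear map $\mathsf{Share}:\mathbb{F}^\ell\times\mathbb{F}^e\to\mathbb{F}^{b_1}\times\dots\times\mathbb{F}^{b_k}$ together with an access structure $\Gamma$ (sets that can linearly recover the secret from their shares) and adversary structure $\mathcal{T}$ (sets whose shares, for uniform randomness, have a distribution independent of the secret); information rate $\ell/\sum_jb_j$. Black-box transformation with parameters $(t,k,k_0,\ell,\mathbb{F})$: a $k$-party $\ell$-LMSSS $\mathcal{L}=(\mathsf{Share}_\mathcal{L},\mathsf{Rec}_\mathcal{L})$ over $\mathbb{F}$ with parameters $(e,b_1,\dots,b_k)$ (all $k$ parties together qualified), replication functions $\psi_i:[k_0]\to2^{[k]}$ ($i\in[\ell]$) and conversion functions $\varphi_j:\mathbb{F}^{c_j}\to\mathbb{F}^{b_j}$, $c_j=\sum_{i=1}^\ell|\{v\in[k_0]:j\in\psi_i(v)\}|$, such that for every $(y_i^{(v)})_{i\in[\ell],v\in[k_0]}$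 there is $\mathbf{r}$ with $(\varphi_j(\mathbf{Y}(j)))_{j}=\mathsf{Share}_\mathcal{L}((\sum_vy_1^{(v)},\dots,\sum_vy_\ell^{(v)}),\mathbf{r})$ where $\mathbf{Y}(j)=(y_i^{(v)})_{i,v:\,j\in\psi_i(v)}$, and for every $T\subseteq[k]$ with $|T|\le t$ and $i\in[\ell]$, $|\bigcup_{j\in T}\{v:j\in\psi_i(v)\}|\le k_0-1$. Its rate is the information rate of $\mathcal{L}$. $\mathbb{F}$-linear code $C\subseteq(\mathbb{F}^b)^k$: $\mathbb{F}$-subspace; rate $\dim_{\mathbb{F}}C/(bk)$; distance = minimum number of coordinates in $[k]$ where two distinct codewords differ. *)

theory Defs
  imports Complex_Main "HOL-Library.Function_Algebras"
begin

(* Vectors in F^n are represented as functions nat => 'f vanishing outside {0..<n}.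
   Parties, secret coordinates, replication indices are 0-based: [k] = {0..<k}. *)
definition fvec :: "nat \<Rightarrow> (nat \<Rightarrow> 'f::zero) set" where
  "fvec n = {v. \<forall>i\<ge>n. v i = 0}"

definition lmsss_linear ::
  "nat \<Rightarrow> nat \<Rightarrow> nat \<Rightarrow> (nat \<Rightarrow> nat) \<Rightarrow>
   ((nat \<Rightarrow> 'f::field) \<Rightarrow> (nat \<Rightarrow> 'f) \<Rightarrow> nat \<Rightarrow> nat \<Rightarrow> 'f) \<Rightarrow> bool" where
  "lmsss_linear l e k b Share \<longleftrightarrow>
     (\<forall>s r. s \<in> fvec l \<longrightarrow> r \<in> fvec e \<longrightarrow> (\<forall>j<k. Share s r j \<in> fvec (b j))) \<and>
     (\<forall>c s r s' r'. s \<in> fvec l \<longrightarrow> r \<in> fvec e \<longrightarrow> s' \<in> fvec l \<longrightarrow> r' \<in> fvec e \<longrightarrow>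
        (\<forall>j<k. Share (\<lambda>i. c * s i + s' i) (\<lambda>i. c * r i + r' i) j
               = (\<lambda>m. c * Share s r j m + Share s' r' j m)))"

definition all_parties_qualified ::
  "nat \<Rightarrow> nat \<Rightarrow> nat \<Rightarrow> (nat \<Rightarrow> nat) \<Rightarrow>
   ((nat \<Rightarrow> 'f::field) \<Rightarrow> (nat \<Rightarrow> 'f) \<Rightarrow> nat \<Rightarrow> nat \<Rightarrow> 'f) \<Rightarrow> bool" where
  "all_parties_qualified l e k b Share \<longleftrightarrow>
     (\<exists>coef::nat \<Rightarrow> nat \<Rightarrow> nat \<Rightarrow> 'f. \<forall>s r. s \<in> fvec l \<longrightarrow> r \<in> fvec e \<longrightarrow>
        (\<forall>i<l. s i = (\<Sum>j<k. \<Sum>m<b j. coef i j m * Share s r j m)))"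

definition conv_input_len :: "nat \<Rightarrow> nat \<Rightarrow> (nat \<Rightarrow> nat \<Rightarrow> nat set) \<Rightarrow> nat \<Rightarrow> nat" where
  "conv_input_len l k0 \<psi> j = card {(i, v). i < l \<and> v < k0 \<and> j \<in> \<psi> i v}"

(* Y(j) = (y_i^(v))_{i,v : j in psi_i(v)}, represented as a function on the index pairs
   (i,v) with j in psi_i(v) (zero elsewhere); this is F^{c_j} up to a fixed reindexing. *)
definition conv_input ::
  "nat \<Rightarrow> nat \<Rightarrow> (nat \<Rightarrow> nat \<Rightarrow> nat set) \<Rightarrow> (nat \<Rightarrow> nat \<Rightarrow> 'f::zero) \<Rightarrow> nat \<Rightarrow> nat \<times> nat \<Rightarrow> 'f" where
  "conv_input l k0 \<psi> y j = (\<lambda>(i, v). if i < l \<and> v < k0 \<and> j \<in> \<psi> i v then y i v else 0)"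

(* Black-box transformation with parameters (t,k,k0,l,F), with explicit LMSSS data
   (e, b, Share), replication functions psi and conversion functions phi. *)
definition black_box_transformation ::
  "nat \<Rightarrow> nat \<Rightarrow> nat \<Rightarrow> nat \<Rightarrow> nat \<Rightarrow> (nat \<Rightarrow> nat) \<Rightarrow>
   ((nat \<Rightarrow> 'f::field) \<Rightarrow> (nat \<Rightarrow> 'f) \<Rightarrow> nat \<Rightarrow> nat \<Rightarrow> 'f) \<Rightarrow>
   (nat \<Rightarrow> nat \<Rightarrow> nat set) \<Rightarrow> (nat \<Rightarrow> (nat \<times> nat \<Rightarrow> 'f) \<Rightarrow> nat \<Rightarrow> 'f) \<Rightarrow> bool" where
  "black_box_transformation t k k0 l e b Share \<psi> \<phi> \<longleftrightarrow>
     lmsss_linear l e k b Share \<and>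
     all_parties_qualified l e k b Share \<and>
     (\<forall>i<l. \<forall>v<k0. \<psi> i v \<subseteq> {0..<k}) \<and>
     (\<forall>y :: nat \<Rightarrow> nat \<Rightarrow> 'f. \<exists>r \<in> fvec e. \<forall>j<k.
        \<phi> j (conv_input l k0 \<psi> y j) = Share (\<lambda>i. if i < l then \<Sum>v<k0. y i v else 0) r j) \<and>
     (\<forall>T \<subseteq> {0..<k}. card T \<le> t \<longrightarrow> (\<forall>i<l.
        card (\<Union>j\<in>T. {v. v < k0 \<and> j \<in> \<psi> i v}) \<le> k0 - 1))"

definition code_space :: "nat \<Rightarrow> nat \<Rightarrow> (nat \<Rightarrow> nat \<Rightarrow> 'f::zero) set" where
  "code_space k b = {x. (\<forall>j<k. x j \<in> fvec b) \<and> (\<forall>j\<ge>k. x j = 0)}"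

definition code_scale :: "'f::field \<Rightarrow> (nat \<Rightarrow> nat \<Rightarrow> 'f) \<Rightarrow> nat \<Rightarrow> nat \<Rightarrow> 'f" where
  "code_scale c x = (\<lambda>j m. c * x j m)"

definition linear_code :: "nat \<Rightarrow> nat \<Rightarrow> (nat \<Rightarrow> nat \<Rightarrow> 'f::field) set \<Rightarrow> bool" where
  "linear_code k b C \<longleftrightarrow> C \<subseteq> code_space k b \<and> 0 \<in> C \<and>
     (\<forall>x\<in>C. \<forall>y\<in>C. x + y \<in> C) \<and> (\<forall>c. \<forall>x\<in>C. code_scale c x \<in> C)"

definition code_rate :: "nat \<Rightarrow> nat \<Rightarrow> (nat \<Rightarrow> nat \<Rightarrow> 'f::field) set \<Rightarrow> real" where
  "code_rate k b C = real (vector_space.dim code_scale C) / real (b * k)"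

definition code_distance_ge :: "nat \<Rightarrow> (nat \<Rightarrow> nat \<Rightarrow> 'f) set \<Rightarrow> nat \<Rightarrow> bool" where
  "code_distance_ge k C d \<longleftrightarrow> (\<forall>x\<in>C. \<forall>y\<in>C. x \<noteq> y \<longrightarrow> d \<le> card {j. j < k \<and> x j \<noteq> y j})"

end

theory Submission
  imports Defs "HOL-Library.Function_Algebras"
begin


definition ip :: "'x set \<Rightarrow> ('x \<Rightarrow> 'f::field) \<Rightarrow> ('x \<Rightarrow> 'f) \<Rightarrow> 'f" where
  "ip J f g = (\<Sum>y\<in>J. f y * g y)"

lemma ip_diff2: "ip J f (\<lambda>y. g y - c * h y) = ip J f g - c * ip J f h"
  by (simp add: ip_def algebra_simps sum_subtractf sum_distrib_left)
lemma ip_diff1: "ip J (\<lambda>y. g y - c * h y) f = ip J g f - c * ip J h f"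
  by (simp add: ip_def algebra_simps sum_subtractf sum_distrib_left)
lemma ip_sum2: "ip J f (\<lambda>y. g y - (\<Sum>i<n. c i * h i y)) = ip J f g - (\<Sum>i<n. c i * ip J f (h i))"
  by (simp add: ip_def algebra_simps sum_subtractf sum_distrib_left sum.swap[of _ J])

lemma dual_basis:
  fixes \<rho> :: "nat \<Rightarrow> 'x \<Rightarrow> 'f::field" and J :: "'x set"
  assumes fin: "finite J"
  and ind: "\<And>a. (\<forall>x\<in>J. (\<Sum>i<n. a i * \<rho> i x) = 0) \<Longrightarrow> \<forall>i<n. a i = 0"
  shows "\<exists>w. \<forall>i<n. \<forall>i'<n. ip J (\<rho> i) (w i') = (if i = i' then 1 else 0)"
  using ind
proof (induction n arbitrary: \<rho>)
  case 0
  then show ?case by simp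
next
  case (Suc n)
  have "\<exists>x\<in>J. \<rho> n x \<noteq> 0"
  proof (rule ccontr)
    assume "\<not> ?thesis"
    then have "\<forall>x\<in>J. (\<Sum>i<Suc n. (if i = n then 1 else 0) * \<rho> i x) = 0"
      by simp
    from Suc.prems[OF this] show False by auto
  qed
  then obtain x where xJ: "x \<in> J" and xn: "\<rho> n x \<noteq> 0" by blast
  define c where "c i = \<rho> i x / \<rho> n x" for i
  define \<rho>' where "\<rho>' i y = \<rho> i y - c i * \<rho> n y" for i y
  have ind': "\<forall>i<n. a i = 0" if h: "\<forall>y\<in>J. (\<Sum>i<n. a i * \<rho>' i y) = 0" for a
  proof -
    define a' where "a' i = (if i < n then a i else - (\<Sum>i<n. a i * c i))" for i
    have "\<forall>y\<in>J. (\<Sum>i<Suc n. a' i * \<rho> i y) = 0"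
    proof
      fix y assume "y \<in> J"
      have "(\<Sum>i<Suc n. a' i * \<rho> i y) = (\<Sum>i<n. a i * \<rho> i y) - (\<Sum>i<n. a i * c i) * \<rho> n y"
        by (simp add: a'_def)
      also have "\<dots> = (\<Sum>i<n. a i * \<rho>' i y)"
        by (simp add: \<rho>'_def algebra_simps sum_subtractf sum_distrib_left sum_distrib_right)
      finally show "(\<Sum>i<Suc n. a' i * \<rho> i y) = 0" using h \<open>y \<in> J\<close> by simp
    qed
    from Suc.prems[OF this] have "\<forall>i<Suc n. a' i = 0" .
    then show ?thesis by (metis a'_def less_SucI)
  qed
  from Suc.IH[OF ind'] obtain w' where
    w': "\<forall>i<n. \<forall>i'<n. ip J (\<rho>' i) (w' i') = (if i = i' then 1 else 0)" by blast
  define z where "z y = (if y = x then 1 / \<rho> n x else 0)" for y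
  have ipz: "ip J (\<rho> i) z = c i" for i
  proof -
    have "ip J (\<rho> i) z = (\<Sum>y\<in>J. if y = x then \<rho> i y / \<rho> n x else 0)"
      unfolding ip_def z_def by (rule sum.cong) auto
    also have "\<dots> = c i" using fin xJ by (simp add: c_def)
    finally show ?thesis .
  qed
  have cn: "c n = 1" using xn by (simp add: c_def)
  have ipz': "ip J (\<rho>' i) z = 0" for i
    unfolding \<rho>'_def by (simp add: ip_diff1 ipz cn)
  have decomp: "ip J (\<rho> i) g = ip J (\<rho>' i) g + c i * ip J (\<rho> n) g" for i g
    unfolding \<rho>'_def ip_def by (simp add: algebra_simps sum_subtractf sum_distrib_left)
  define d where "d i = ip J (\<rho> n) (w' i)" for i
  define w1 where "w1 i y = w' i y - d i * z y" for i y
  define wn where "wn y = z y - (\<Sum>i<n. c i * w1 i y)" for y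
  define w where "w i = (if i < n then w1 i else wn)" for i
  have A: "ip J (\<rho>' i) (w1 i') = (if i = i' then 1 else 0)" if "i < n" "i' < n" for i i'
    unfolding w1_def using that w' by (simp add: ip_diff2 ipz')
  have B: "ip J (\<rho> n) (w1 i') = 0" for i'
    unfolding w1_def by (simp add: ip_diff2 ipz cn d_def)
  have C: "ip J (\<rho> i) (w1 i') = (if i = i' then 1 else 0)" if "i < n" "i' < n" for i i'
    using A[OF that] B decomp[of i "w1 i'"] by simp
  have D: "ip J (\<rho> i) wn = (if i = n then 1 else 0)" if "i < Suc n" for i
  proof (cases "i = n")
    case True
    then show ?thesis unfolding wn_def by (simp add: ip_sum2 ipz cn B)
  next
    case False
    then have "i < n" using that by simp
    have "(\<Sum>j<n. c j * ip J (\<rho> i) (w1 j)) = (\<Sum>j<n. if j = i then c j else 0)"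
      by (rule sum.cong) (auto simp: C[OF \<open>i < n\<close>])
    also have "\<dots> = c i" using \<open>i < n\<close> by simp
    finally show ?thesis unfolding wn_def using False by (simp add: ip_sum2 ipz)
  qed
  have "\<forall>i<Suc n. \<forall>i'<Suc n. ip J (\<rho> i) (w i') = (if i = i' then 1 else 0)"
  proof (intro allI impI)
    fix i i' assume i: "i < Suc n" and i': "i' < Suc n"
    show "ip J (\<rho> i) (w i') = (if i = i' then 1 else 0)"
    proof (cases "i' < n")
      case True
      then show ?thesis
      proof (cases "i < n")
        case True
        then show ?thesis using C \<open>i' < n\<close> by (simp add: w_def)
      next
        case False
        then have "i = n" using i by simp
        then show ?thesis using B \<open>i' < n\<close> by (simp add: w_def)
      qed
    next
      case False
      then have "i' = n" using i' by simp
      then show ?thesis using D[OF i] by (simp add: w_def)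
    qed
  qed
  then show ?case by blast
qed



lemma sum_fun_app: "(sum F I) x = (\<Sum>i\<in>I. F i x)"
  by (induction I rule: infinite_finite_induct) auto

lemma vs_code: "vector_space (code_scale :: 'f::field \<Rightarrow> (nat \<Rightarrow> nat \<Rightarrow> 'f) \<Rightarrow> _)"
  by unfold_locales (auto simp: code_scale_def fun_eq_iff algebra_simps)

lemma code_sum_apply: "(\<Sum>i\<in>I. code_scale (a i) (g i)) j m = (\<Sum>i\<in>I. a i * (g i :: nat \<Rightarrow> nat \<Rightarrow> 'f::field) j m)"
  by (simp add: sum_fun_app code_scale_def)

lemma only_if_dir:
  fixes Share :: "(nat \<Rightarrow> 'f::{field,finite}) \<Rightarrow> (nat \<Rightarrow> 'f) \<Rightarrow> nat \<Rightarrow> nat \<Rightarrow> 'f"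
  assumes tk: "t \<le> k"
    and bb: "black_box_transformation t k (k choose t) l e (\<lambda>_. b) Share \<psi> \<phi>"
  shows "\<exists>C :: (nat \<Rightarrow> nat \<Rightarrow> 'f) set. linear_code k b C \<and>
                 code_rate k b C \<ge> real l / real (k * b) \<and> code_distance_ge k C (t + 1)"
proof -
  define k0 where "k0 = k choose t"
  have k0pos: "0 < k0" using tk by (simp add: k0_def)
  from bb have lin: "lmsss_linear l e k (\<lambda>_. b) Share"
    and qual: "all_parties_qualified l e k (\<lambda>_. b) Share"
    and cor: "\<forall>y :: nat \<Rightarrow> nat \<Rightarrow> 'f. \<exists>r \<in> fvec e. \<forall>j<k.
        \<phi> j (conv_input l k0 \<psi> y j) = Share (\<lambda>i. if i < l then \<Sum>v<k0. y i v else 0) r j"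
    and priv: "\<forall>T \<subseteq> {0..<k}. card T \<le> t \<longrightarrow> (\<forall>i<l.
        card (\<Union>j\<in>T. {v. v < k0 \<and> j \<in> \<psi> i v}) \<le> k0 - 1)"
    unfolding black_box_transformation_def k0_def by auto
  from qual obtain coef :: "nat \<Rightarrow> nat \<Rightarrow> nat \<Rightarrow> 'f" where
    rec: "\<And>s r i. s \<in> fvec l \<Longrightarrow> r \<in> fvec e \<Longrightarrow> i < l \<Longrightarrow>
        s i = (\<Sum>j<k. \<Sum>m<b. coef i j m * Share s r j m)"
    unfolding all_parties_qualified_def by blast
  have Delta: "\<exists>\<Delta>. (\<forall>j\<in>T. \<forall>m. \<Delta> j m = 0) \<and>
      (\<forall>i<l. (\<Sum>j<k. \<Sum>m<b. coef i j m * \<Delta> j m) = (if i = i0 then 1 else 0))"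
    if T: "T \<subseteq> {0..<k}" "card T \<le> t" and i0: "i0 < l" for T i0
  proof -
    let ?U = "\<Union>j\<in>T. {v. v < k0 \<and> j \<in> \<psi> i0 v}"
    have cU: "card ?U \<le> k0 - 1" using priv T i0 by blast
    have "\<exists>v0<k0. v0 \<notin> ?U"
    proof (rule ccontr)
      assume "\<not> ?thesis"
      then have "{0..<k0} \<subseteq> ?U" by auto
      moreover have "finite ?U" by (rule finite_subset[of _ "{0..<k0}"]) auto
      ultimately have "k0 \<le> card ?U" by (metis card_atLeastLessThan card_mono diff_zero)
      with cU k0pos show False by simp
    qed
    then obtain v0 where v0: "v0 < k0" "v0 \<notin> ?U" by blast
    define y :: "nat \<Rightarrow> nat \<Rightarrow> 'f" where "y i v = (if i = i0 \<and> v = v0 then 1 else 0)" for i v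
    define y0 :: "nat \<Rightarrow> nat \<Rightarrow> 'f" where "y0 i v = 0" for i v
    define s1 :: "nat \<Rightarrow> 'f" where "s1 = (\<lambda>i. if i < l then \<Sum>v<k0. y i v else 0)"
    define s0 :: "nat \<Rightarrow> 'f" where "s0 = (\<lambda>i. if i < l then \<Sum>v<k0. y0 i v else 0)"
    obtain r1 where r1: "r1 \<in> fvec e" "\<forall>j<k. \<phi> j (conv_input l k0 \<psi> y j) = Share s1 r1 j"
      using cor s1_def by blast
    obtain r0 where r0: "r0 \<in> fvec e" "\<forall>j<k. \<phi> j (conv_input l k0 \<psi> y0 j) = Share s0 r0 j"
      using cor s0_def by blast
    have s1v: "s1 i = (if i = i0 then 1 else 0)" for i
      using i0 v0 by (auto simp: s1_def y_def)
    have s0v: "s0 i = 0" for i by (simp add: s0_def y0_def)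
    have s1f: "s1 \<in> fvec l" using i0 by (auto simp: fvec_def s1v)
    have s0f: "s0 \<in> fvec l" by (auto simp: fvec_def s0v)
    have same: "conv_input l k0 \<psi> y j = conv_input l k0 \<psi> y0 j" if "j \<in> T" for j
      using v0 that by (auto simp: conv_input_def y_def y0_def fun_eq_iff)
    define \<Delta> where "\<Delta> j m = Share s1 r1 j m - Share s0 r0 j m" for j m
    have "\<forall>j\<in>T. \<forall>m. \<Delta> j m = 0"
    proof (intro ballI allI)
      fix j m assume "j \<in> T"
      then have "j < k" using T by auto
      then have "Share s1 r1 j = Share s0 r0 j" using r1(2) r0(2) same[OF \<open>j \<in> T\<close>] by metis
      then show "\<Delta> j m = 0" by (simp add: \<Delta>_def)
    qed
    moreover have "\<forall>i<l. (\<Sum>j<k. \<Sum>m<b. coef i j m * \<Delta> j m) = (if i = i0 then 1 else 0)"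
    proof (intro allI impI)
      fix i assume "i < l"
      have "(\<Sum>j<k. \<Sum>m<b. coef i j m * \<Delta> j m) =
            (\<Sum>j<k. \<Sum>m<b. coef i j m * Share s1 r1 j m) - (\<Sum>j<k. \<Sum>m<b. coef i j m * Share s0 r0 j m)"
        by (simp add: \<Delta>_def right_diff_distrib sum_subtractf)
      also have "\<dots> = s1 i - s0 i" using rec[OF s1f r1(1) \<open>i < l\<close>] rec[OF s0f r0(1) \<open>i < l\<close>] by simp
      finally show "(\<Sum>j<k. \<Sum>m<b. coef i j m * \<Delta> j m) = (if i = i0 then 1 else 0)"
        by (simp add: s1v s0v)
    qed
    ultimately show ?thesis by blast
  qed
  define X :: "(nat \<Rightarrow> 'f) \<Rightarrow> nat \<Rightarrow> nat \<Rightarrow> 'f" where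
    "X a = (\<lambda>j m. if j < k \<and> m < b then \<Sum>i<l. a i * coef i j m else 0)" for a
  have key: "\<forall>i<l. a i = 0" if T: "T \<subseteq> {0..<k}" "card T \<le> t"
     and z: "\<forall>j<k. j \<notin> T \<longrightarrow> (\<forall>m. X a j m = 0)" for T a
  proof (intro allI impI)
    fix i0 assume i0: "i0 < l"
    obtain \<Delta> where D1: "\<forall>j\<in>T. \<forall>m. \<Delta> j m = 0"
      and D2: "\<forall>i<l. (\<Sum>j<k. \<Sum>m<b. coef i j m * \<Delta> j m) = (if i = i0 then 1 else 0)"
      using Delta[OF T i0] by blast
    have "(\<Sum>j<k. \<Sum>m<b. X a j m * \<Delta> j m) = (\<Sum>j<k. \<Sum>m<b. \<Sum>i<l. a i * (coef i j m * \<Delta> j m))"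
      by (simp add: X_def sum_distrib_right mult.assoc)
    also have "\<dots> = (\<Sum>i<l. a i * (\<Sum>j<k. \<Sum>m<b. coef i j m * \<Delta> j m))"
      by (simp add: sum_distrib_left sum.swap[of _ "{..<l}"])
    also have "\<dots> = (\<Sum>i<l. if i = i0 then a i else 0)"
      by (rule sum.cong) (auto simp: D2)
    also have "\<dots> = a i0" using i0 by simp
    finally have eq: "(\<Sum>j<k. \<Sum>m<b. X a j m * \<Delta> j m) = a i0" .
    have "(\<Sum>j<k. \<Sum>m<b. X a j m * \<Delta> j m) = 0"
      by (rule sum.neutral, intro ballI sum.neutral) (use D1 z in auto)
    with eq show "a i0 = 0" by simp
  qed
  have Xdep: "X a = X a'" if "\<forall>i<l. a i = a' i" for a a'
    using that unfolding X_def by (auto simp: fun_eq_iff intro!: sum.cong)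
  have Xdiff: "X (\<lambda>i. a i - a' i) j m = X a j m - X a' j m" for a a' j m
    by (simp add: X_def left_diff_distrib sum_subtractf)
  define C where "C = range X"
  have lc: "linear_code k b C"
    unfolding linear_code_def
  proof (intro conjI ballI allI subsetI)
    fix x assume "x \<in> C"
    then show "x \<in> code_space k b" by (auto simp: C_def X_def code_space_def fvec_def)
  next
    show "0 \<in> C" unfolding C_def by (rule range_eqI[of _ _ "\<lambda>_. 0"]) (simp add: X_def fun_eq_iff)
  next
    fix x y assume "x \<in> C" "y \<in> C"
    then obtain a a' where "x = X a" "y = X a'" by (auto simp: C_def)
    then show "x + y \<in> C" unfolding C_def
      by (intro range_eqI[of _ _ "\<lambda>i. a i + a' i"]) (auto simp: X_def fun_eq_iff distrib_right sum.distrib)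
  next
    fix c x assume "x \<in> C"
    then obtain a where "x = X a" by (auto simp: C_def)
    then show "code_scale c x \<in> C" unfolding C_def
      by (intro range_eqI[of _ _ "\<lambda>i. c * a i"]) (auto simp: X_def fun_eq_iff code_scale_def sum_distrib_left mult.assoc)
  qed
  have dist: "code_distance_ge k C (t + 1)"
    unfolding code_distance_ge_def
  proof (intro ballI impI)
    fix x y assume "x \<in> C" "y \<in> C" "x \<noteq> y"
    then obtain a a' where xa: "x = X a" and ya: "y = X a'" by (auto simp: C_def)
    let ?T = "{j. j < k \<and> x j \<noteq> y j}"
    show "t + 1 \<le> card ?T"
    proof (rule ccontr)
      assume "\<not> t + 1 \<le> card ?T"
      then have "card ?T \<le> t" by simp
      moreover have "?T \<subseteq> {0..<k}" by auto
      moreover have "\<forall>j<k. j \<notin> ?T \<longrightarrow> (\<forall>m. X (\<lambda>i. a i - a' i) j m = 0)"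
        using xa ya by (auto simp: Xdiff)
      ultimately have "\<forall>i<l. a i - a' i = 0" by (intro key[of ?T]) auto
      then have "X a = X a'" by (intro Xdep) simp
      with xa ya \<open>x \<noteq> y\<close> show False by simp
    qed
  qed
  interpret vs: vector_space "code_scale :: 'f \<Rightarrow> (nat \<Rightarrow> nat \<Rightarrow> 'f) \<Rightarrow> _" by (rule vs_code)
  define E where "E i0 = X (\<lambda>i. if i = i0 then 1 else 0)" for i0
  define B where "B = E ` {..<l}"
  have Xzero: "\<forall>i<l. a i = 0" if "X a = 0" for a
    by (rule key[of "{}"]) (use that in auto)
  have injE: "inj_on E {..<l}"
  proof (rule inj_onI)
    fix i i' assume "i \<in> {..<l}" "i' \<in> {..<l}" "E i = E i'"
    then have "X (\<lambda>j. (if j = i then 1 else 0) - (if j = i' then 1 else 0)) = 0"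
      by (simp add: E_def fun_eq_iff Xdiff)
    from Xzero[OF this] \<open>i \<in> {..<l}\<close> show "i = i'" by (metis lessThan_iff one_neq_zero diff_zero)
  qed
  have Xsum: "(\<Sum>i<l. code_scale (a i) (E i)) = X a" for a
  proof -
    have "(\<Sum>i<l. code_scale (a i) (E i)) j m = X a j m" for j m
    proof -
      have "(\<Sum>i<l. code_scale (a i) (E i)) j m = (\<Sum>i<l. a i * E i j m)" by (rule code_sum_apply)
      also have "\<dots> = X a j m"
      proof (cases "j < k \<and> m < b")
        case True
        have "(\<Sum>i<l. a i * E i j m) = (\<Sum>i<l. a i * coef i j m)"
        proof (rule sum.cong)
          fix i assume "i \<in> {..<l}"
          have "E i j m = (\<Sum>i'<l. (if i' = i then 1 else 0) * coef i' j m)" using True by (simp add: E_def X_def)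
          also have "\<dots> = coef i j m" using \<open>i \<in> {..<l}\<close> by (simp add: if_distrib[of "\<lambda>c. c * _"] cong: if_cong)
          finally show "a i * E i j m = a i * coef i j m" by simp
        qed simp
        then show ?thesis using True by (simp add: X_def)
      next
        case False
        then have "E i j m = 0" for i unfolding X_def E_def by auto
        then show ?thesis using False by (auto simp: X_def)
      qed
      finally show ?thesis .
    qed
    then show ?thesis by (simp add: fun_eq_iff)
  qed
  have indep: "vs.independent B"
  proof (rule vs.independent_if_scalars_zero)
    show "finite B" by (simp add: B_def)
  next
    fix f x assume h: "(\<Sum>x\<in>B. code_scale (f x) x) = 0" and "x \<in> B"
    have "(\<Sum>x\<in>B. code_scale (f x) x) = (\<Sum>i<l. code_scale (f (E i)) (E i))"
      unfolding B_def by (simp add: sum.reindex[OF injE])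
    with h have "X (\<lambda>i. f (E i)) = 0" by (simp add: Xsum)
    from Xzero[OF this] \<open>x \<in> B\<close> show "f x = 0" by (auto simp: B_def)
  qed
  have BC: "B \<subseteq> C" by (auto simp: B_def C_def E_def)
  have CB: "C \<subseteq> vs.span B"
  proof
    fix x assume "x \<in> C"
    then obtain a where "x = X a" by (auto simp: C_def)
    then have "x = (\<Sum>i<l. code_scale (a i) (E i))" by (simp add: Xsum)
    also have "\<dots> \<in> vs.span B"
      by (intro vs.span_sum vs.span_scale vs.span_base) (auto simp: B_def)
    finally show "x \<in> vs.span B" .
  qed
  have "card B = vs.dim C" by (rule vs.basis_card_eq_dim[OF BC CB indep])
  moreover have "card B = l" by (simp add: B_def card_image[OF injE])
  ultimately have "vs.dim C = l" by simp
  then have "code_rate k b C \<ge> real l / real (k * b)"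
    by (simp add: code_rate_def mult.commute)
  with lc dist show ?thesis by blast
qed



lemma subsets_enum:
  obtains \<tau> where "bij_betw \<tau> {0..<k choose t} {S. S \<subseteq> {0..<(k::nat)} \<and> card S = t}"
proof -
  have "card {S. S \<subseteq> {0..<k} \<and> card S = t} = k choose t"
    using n_subsets[of "{0..<k}" t] by simp
  moreover have "finite {S. S \<subseteq> {0..<k} \<and> card S = t}" by simp
  ultimately show ?thesis using ex_bij_betw_nat_finite that by metis
qed

lemma priv_cond:
  assumes bij: "bij_betw \<tau> {0..<(k0::nat)} {S. S \<subseteq> {0..<(k::nat)} \<and> card S = t}"
    and T: "T \<subseteq> {0..<k}" "card T \<le> t" and tk: "t \<le> k"
  shows "card (\<Union>j\<in>T. {v. v < k0 \<and> j \<in> {0..<k} - \<tau> v}) \<le> k0 - 1"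
proof -
  have fT: "finite T" using T finite_subset by blast
  have "t - card T \<le> card ({0..<k} - T)"
    using T tk fT by (simp add: card_Diff_subset)
  then obtain S' where S': "S' \<subseteq> {0..<k} - T" "card S' = t - card T" "finite S'"
    by (rule obtain_subset_with_card_n)
  define S where "S = T \<union> S'"
  have "card S = card T + card S'" unfolding S_def
    using S' fT by (subst card_Un_disjoint) auto
  then have "card S = t" using S' T by simp
  moreover have "S \<subseteq> {0..<k}" using S' T by (auto simp: S_def)
  ultimately have "S \<in> {S. S \<subseteq> {0..<k} \<and> card S = t}" by simp
  then obtain v0 where v0: "v0 \<in> {0..<k0}" "\<tau> v0 = S"
    using bij by (metis bij_betw_def imageE)
  have "(\<Union>j\<in>T. {v. v < k0 \<and> j \<in> {0..<k} - \<tau> v}) \<subseteq> {0..<k0} - {v0}"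
    using v0 by (auto simp: S_def)
  then have "card (\<Union>j\<in>T. {v. v < k0 \<and> j \<in> {0..<k} - \<tau> v}) \<le> card ({0..<k0} - {v0})"
    by (intro card_mono) auto
  also have "\<dots> = k0 - 1" using v0 by simp
  finally show ?thesis .
qed

lemma conv_len:
  assumes bij: "bij_betw \<tau> {0..<(k0::nat)} {S. S \<subseteq> {0..<(k::nat)} \<and> card S = t}"
    and j: "j < k"
  shows "card {(i, v). i < l \<and> v < k0 \<and> j \<in> {0..<k} - \<tau> v} = l * ((k - 1) choose t)"
proof -
  have eq: "{(i, v). i < l \<and> v < k0 \<and> j \<in> {0..<k} - \<tau> v} = {..<l} \<times> {v. v < k0 \<and> j \<notin> \<tau> v}"
    using j by auto
  have inj: "inj_on \<tau> {v. v < k0 \<and> j \<notin> \<tau> v}"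
    using bij unfolding bij_betw_def by (rule inj_on_subset[OF conjunct1]) auto
  have img: "\<tau> ` {v. v < k0 \<and> j \<notin> \<tau> v} = {S. S \<subseteq> {0..<k} - {j} \<and> card S = t}"
  proof
    show "\<tau> ` {v. v < k0 \<and> j \<notin> \<tau> v} \<subseteq> {S. S \<subseteq> {0..<k} - {j} \<and> card S = t}"
      using bij by (auto simp: bij_betw_def)
  next
    show "{S. S \<subseteq> {0..<k} - {j} \<and> card S = t} \<subseteq> \<tau> ` {v. v < k0 \<and> j \<notin> \<tau> v}"
    proof
      fix S assume "S \<in> {S. S \<subseteq> {0..<k} - {j} \<and> card S = t}"
      then have "S \<in> {S. S \<subseteq> {0..<k} \<and> card S = t}" "j \<notin> S" by auto
      then obtain v where "v \<in> {0..<k0}" "\<tau> v = S" using bij by (metis bij_betw_def imageE)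
      with \<open>j \<notin> S\<close> show "S \<in> \<tau> ` {v. v < k0 \<and> j \<notin> \<tau> v}" by auto
    qed
  qed
  have "card {v. v < k0 \<and> j \<notin> \<tau> v} = card {S. S \<subseteq> {0..<k} - {j} \<and> card S = t}"
    using card_image[OF inj] img by simp
  also have "\<dots> = (k - 1) choose t"
    using n_subsets[of "{0..<k} - {j}" t] j by simp
  finally show ?thesis unfolding eq by (simp add: card_cartesian_product)
qed



definition PP :: "nat \<Rightarrow> nat \<Rightarrow> (nat \<Rightarrow> nat \<Rightarrow> 'f) \<Rightarrow> (nat \<Rightarrow> nat \<Rightarrow> 'f) \<Rightarrow> 'f::field" where
  "PP k b x u = (\<Sum>j<k. \<Sum>m<b. x j m * u j m)"

lemma PP_lin: "PP k b x (\<lambda>j m. c * X j m + Y j m) = c * PP k b x X + PP k b x Y"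
  unfolding PP_def by (simp add: distrib_left sum.distrib sum_distrib_left mult.left_commute)

lemma swap3: "(\<Sum>j<k. \<Sum>m<b. \<Sum>i<l. (f i j m::'a::comm_monoid_add)) = (\<Sum>i<l. \<Sum>j<k. \<Sum>m<b. f i j m)"
proof -
  have "(\<Sum>j<k. \<Sum>m<b. \<Sum>i<l. f i j m) = (\<Sum>j<k. \<Sum>i<l. \<Sum>m<b. f i j m)"
    by (rule sum.cong[OF refl], rule sum.swap)
  also have "\<dots> = (\<Sum>i<l. \<Sum>j<k. \<Sum>m<b. f i j m)" by (rule sum.swap)
  finally show ?thesis .
qed

lemma PP_sum: "PP k b x (\<lambda>j m. X j m + (\<Sum>i<l. c i * Y i j m)) = PP k b x X + (\<Sum>i<l. c i * PP k b x (Y i))"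
proof -
  have "PP k b x (\<lambda>j m. X j m + (\<Sum>i<l. c i * Y i j m)) =
        PP k b x X + (\<Sum>j<k. \<Sum>m<b. \<Sum>i<l. c i * (x j m * Y i j m))"
    unfolding PP_def distrib_left sum.distrib sum_distrib_left by (simp add: mult.left_commute)
  also have "(\<Sum>j<k. \<Sum>m<b. \<Sum>i<l. c i * (x j m * Y i j m)) = (\<Sum>i<l. \<Sum>j<k. \<Sum>m<b. c i * (x j m * Y i j m))"
    by (rule swap3)
  also have "\<dots> = (\<Sum>i<l. c i * PP k b x (Y i))"
    unfolding PP_def by (simp add: sum_distrib_left)
  finally show ?thesis .
qed

lemma PP_sum2: "PP k b x (\<lambda>j m. \<Sum>i<l. \<Sum>v<n. y i v * Y v i j m) = (\<Sum>i<l. \<Sum>v<n. y i v * PP k b x (Y v i))"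
proof -
  have "PP k b x (\<lambda>j m. \<Sum>i<l. \<Sum>v<n. y i v * Y v i j m) = (\<Sum>j<k. \<Sum>m<b. \<Sum>i<l. \<Sum>v<n. y i v * (x j m * Y v i j m))"
    unfolding PP_def sum_distrib_left by (simp add: mult.left_commute)
  also have "\<dots> = (\<Sum>i<l. \<Sum>j<k. \<Sum>m<b. \<Sum>v<n. y i v * (x j m * Y v i j m))" by (rule swap3)
  also have "\<dots> = (\<Sum>i<l. \<Sum>v<n. \<Sum>j<k. \<Sum>m<b. y i v * (x j m * Y v i j m))"
    by (rule sum.cong[OF refl], rule swap3)
  also have "\<dots> = (\<Sum>i<l. \<Sum>v<n. y i v * PP k b x (Y v i))"
    unfolding PP_def by (simp add: sum_distrib_left)
  finally show ?thesis .
qed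

lemma sum_in_code: "linear_code k b C \<Longrightarrow> (\<And>i. i \<in> I \<Longrightarrow> F i \<in> C) \<Longrightarrow> sum F I \<in> C"
  by (induction I rule: infinite_finite_induct) (auto simp: linear_code_def)

lemma if_dir:
  fixes C :: "(nat \<Rightarrow> nat \<Rightarrow> 'f::{field,finite}) set"
  assumes l0: "0 < l" and tk: "t \<le> k" and b0: "0 < b" and k0: "0 < k"
    and lc: "linear_code k b C" and rate: "code_rate k b C \<ge> real l / real (k * b)"
    and dist: "code_distance_ge k C (t + 1)"
  shows "\<exists>e (Share :: (nat \<Rightarrow> 'f) \<Rightarrow> (nat \<Rightarrow> 'f) \<Rightarrow> nat \<Rightarrow> nat \<Rightarrow> 'f) \<psi> \<phi>.
                 black_box_transformation t k (k choose t) l e (\<lambda>_. b) Share \<psi> \<phi> \<and>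
                 (\<forall>j<k. conv_input_len l (k choose t) \<psi> j = l * ((k - 1) choose t))"
proof -
  interpret vs: vector_space "code_scale :: 'f \<Rightarrow> (nat \<Rightarrow> nat \<Rightarrow> 'f) \<Rightarrow> _" by (rule vs_code)
  have "real l / real (b * k) \<le> real (vs.dim C) / real (b * k)"
    using rate by (simp add: code_rate_def mult.commute)
  then have dimC: "l \<le> vs.dim C" using b0 k0 by (simp add: divide_le_cancel)
  obtain B where B: "B \<subseteq> C" "vs.independent B" "C \<subseteq> vs.span B" "card B = vs.dim C"
    by (rule vs.basis_exists)
  have finB: "finite B" using B(4) dimC l0 by (metis card.infinite not_less le_zero_eq)
  obtain f where f: "bij_betw f {0..<card B} B" using ex_bij_betw_nat_finite[OF finB] by blast
  have injf: "inj_on f {..<l}"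
    using f B(4) dimC by (metis bij_betw_def inj_on_subset lessThan_atLeast0 ivl_subset le0 order_refl)
  have fB: "f i \<in> B" if "i < l" for i
    using f B(4) dimC that by (auto simp: bij_betw_def)
  define g where "g = f"
  have gC: "g i \<in> C" if "i < l" for i using fB[OF that] B(1) by (auto simp: g_def)
  have indep: "\<forall>i<l. a i = 0" if h: "(\<Sum>i<l. code_scale (a i) (g i)) = 0" for a
  proof -
    define u where "u v = a (the_inv_into {..<l} f v)" for v
    have "f ` {..<l} \<subseteq> B" using fB by auto
    moreover have "(\<Sum>v\<in>f ` {..<l}. code_scale (u v) v) = 0"
      using h by (simp add: sum.reindex[OF injf] u_def the_inv_into_f_f[OF injf] g_def)
    ultimately have "\<forall>v\<in>f ` {..<l}. u v = 0"
      using B(2) unfolding vs.independent_explicit_finite_subsets by blast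
    then show ?thesis by (auto simp: u_def the_inv_into_f_f[OF injf])
  qed
  define G where "G a = (\<Sum>i<l. code_scale (a i) (g i))" for a
  have GC: "G a \<in> C" for a unfolding G_def
    by (rule sum_in_code[OF lc]) (use lc gC in \<open>auto simp: linear_code_def\<close>)
  have Gapp: "G a j m = (\<Sum>i<l. a i * g i j m)" for a j m
    unfolding G_def by (rule code_sum_apply)
  have Ccs: "x \<in> code_space k b" if "x \<in> C" for x using lc that by (auto simp: linear_code_def)
  have keyC: "\<forall>i<l. a i = 0" if T: "T \<subseteq> {0..<k}" "card T \<le> t"
    and z: "\<forall>j<k. j \<notin> T \<longrightarrow> (\<forall>m<b. (\<Sum>i<l. a i * g i j m) = 0)" for T a
  proof -
    have "G a = 0"
    proof (rule ccontr)
      assume ne: "G a \<noteq> 0"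
      have "0 \<in> C" using lc by (simp add: linear_code_def)
      then have "t + 1 \<le> card {j. j < k \<and> G a j \<noteq> 0 j}"
        using dist GC ne unfolding code_distance_ge_def by blast
      moreover have "{j. j < k \<and> G a j \<noteq> 0 j} \<subseteq> T"
      proof
        fix j assume j: "j \<in> {j. j < k \<and> G a j \<noteq> 0 j}"
        show "j \<in> T"
        proof (rule ccontr)
          assume "j \<notin> T"
          have "G a j m = 0" for m
          proof (cases "m < b")
            case True then show ?thesis using z j \<open>j \<notin> T\<close> by (simp add: Gapp)
          next
            case False
            have "G a j \<in> fvec b" using Ccs[OF GC] j by (auto simp: code_space_def)
            then show ?thesis using False by (simp add: fvec_def)
          qed
          then show False using j by (auto simp: fun_eq_iff)
        qed
      qed
      then have "card {j. j < k \<and> G a j \<noteq> 0 j} \<le> card T"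
        using T by (intro card_mono) (auto intro: finite_subset)
      ultimately show False using T by simp
    qed
    then show ?thesis using indep by (simp add: G_def)
  qed
  define k0 where "k0 = k choose t"
  have k0pos: "0 < k0" using tk by (simp add: k0_def)
  obtain \<tau> where tau: "bij_betw \<tau> {0..<k0} {S. S \<subseteq> {0..<k} \<and> card S = t}"
    unfolding k0_def by (rule subsets_enum)
  have tauS: "\<tau> v \<subseteq> {0..<k}" "card (\<tau> v) = t" if "v < k0" for v
    using tau that by (auto simp: bij_betw_def)
  have "\<exists>w. \<forall>i<l. \<forall>i'<l. ip {p. fst p < k \<and> fst p \<notin> \<tau> v \<and> snd p < b} (\<lambda>p. g i (fst p) (snd p)) (w i')
           = (if i = i' then 1 else 0)" if v: "v < k0" for v
  proof (rule dual_basis[where n=l])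
    show "finite {p. fst p < k \<and> fst p \<notin> \<tau> v \<and> snd p < b}"
      by (rule finite_subset[of _ "{..<k} \<times> {..<b}"]) auto
  next
    fix a assume h: "\<forall>x\<in>{p. fst p < k \<and> fst p \<notin> \<tau> v \<and> snd p < b}. (\<Sum>i<l. a i * g i (fst x) (snd x)) = 0"
    show "\<forall>i<l. a i = 0"
    proof (rule keyC[of "\<tau> v"])
      show "\<tau> v \<subseteq> {0..<k}" "card (\<tau> v) \<le> t" using tauS[OF v] by auto
      show "\<forall>j<k. j \<notin> \<tau> v \<longrightarrow> (\<forall>m<b. (\<Sum>i<l. a i * g i j m) = 0)"
        using h by auto
    qed
  qed
  then have "\<forall>v. \<exists>w. v < k0 \<longrightarrow> (\<forall>i<l. \<forall>i'<l. ip {p. fst p < k \<and> fst p \<notin> \<tau> v \<and> snd p < b} (\<lambda>p. g i (fst p) (snd p)) (w i')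
           = (if i = i' then 1 else 0))" by blast
  from choice[OF this] obtain wf where wf0: "\<forall>v. v < k0 \<longrightarrow> (\<forall>i<l. \<forall>i'<l. ip {p. fst p < k \<and> fst p \<notin> \<tau> v \<and> snd p < b} (\<lambda>p. g i (fst p) (snd p)) (wf v i')
           = (if i = i' then 1 else 0))" by blast
  have wf: "\<And>v i i'. v < k0 \<Longrightarrow> i < l \<Longrightarrow> i' < l \<Longrightarrow>
     ip {p. fst p < k \<and> fst p \<notin> \<tau> v \<and> snd p < b} (\<lambda>p. g i (fst p) (snd p)) (wf v i') = (if i = i' then 1 else 0)"
    using wf0 by blast
  define W where "W v i j m = (if j < k \<and> j \<notin> \<tau> v \<and> m < b then wf v i (j, m) else 0)" for v i j m
  have Wprop: "PP k b (g i) (W v i') = (if i = i' then 1 else 0)" if "v < k0" "i < l" "i' < l" for v i i'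
  proof -
    let ?J = "{p. fst p < k \<and> fst p \<notin> \<tau> v \<and> snd p < b}"
    have "PP k b (g i) (W v i') = (\<Sum>p\<in>{..<k} \<times> {..<b}. g i (fst p) (snd p) * W v i' (fst p) (snd p))"
      unfolding PP_def by (simp add: sum.cartesian_product case_prod_beta)
    also have "\<dots> = (\<Sum>p\<in>{..<k} \<times> {..<b}. if p \<in> ?J then g i (fst p) (snd p) * wf v i' p else 0)"
      by (rule sum.cong) (auto simp: W_def)
    also have "\<dots> = (\<Sum>p\<in>({..<k} \<times> {..<b}) \<inter> ?J. g i (fst p) (snd p) * wf v i' p)"
      by (rule sum.inter_restrict[symmetric]) simp
    also have "({..<k} \<times> {..<b}) \<inter> ?J = ?J" by auto
    finally show ?thesis using wf[OF that] by (simp add: ip_def)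
  qed
  have W0: "W v i j m = 0" if "\<not> (j < k \<and> j \<notin> \<tau> v \<and> m < b)" for v i j m
    using that by (auto simp: W_def)
  define R :: "(nat \<Rightarrow> 'f) \<Rightarrow> nat \<Rightarrow> nat \<Rightarrow> 'f" where
    "R r j m = (if j < k \<and> m < b then r (j * b + m) else 0)" for r j m
  define Share :: "(nat \<Rightarrow> 'f) \<Rightarrow> (nat \<Rightarrow> 'f) \<Rightarrow> nat \<Rightarrow> nat \<Rightarrow> 'f" where
    "Share s r j m = R r j m + (\<Sum>i<l. (s i - PP k b (g i) (R r)) * W 0 i j m)" for s r j m
  define \<psi> :: "nat \<Rightarrow> nat \<Rightarrow> nat set" where "\<psi> i v = {0..<k} - \<tau> v" for i v
  define \<phi> :: "nat \<Rightarrow> (nat \<times> nat \<Rightarrow> 'f) \<Rightarrow> nat \<Rightarrow> 'f" where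
    "\<phi> j Y m = (\<Sum>i<l. \<Sum>v<k0. Y (i, v) * W v i j m)" for j Y m
  define e where "e = k * b"
  have PShare: "PP k b (g i) (Share s r) = s i" if "i < l" for s r i
  proof -
    have "PP k b (g i) (Share s r) = PP k b (g i) (R r) + (\<Sum>i'<l. (s i' - PP k b (g i') (R r)) * PP k b (g i) (W 0 i'))"
      unfolding Share_def[abs_def] by (rule PP_sum)
    also have "(\<Sum>i'<l. (s i' - PP k b (g i') (R r)) * PP k b (g i) (W 0 i')) =
               (\<Sum>i'<l. if i' = i then s i' - PP k b (g i') (R r) else 0)"
      by (rule sum.cong) (auto simp: Wprop[OF k0pos that])
    also have "\<dots> = s i - PP k b (g i) (R r)" using that by simp
    finally show ?thesis by simp
  qed
  have lin: "lmsss_linear l e k (\<lambda>_. b) Share"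
    unfolding lmsss_linear_def
  proof (intro conjI allI impI)
    fix s r j assume "j < k"
    show "Share s r j \<in> fvec b" by (auto simp: fvec_def Share_def R_def W_def)
  next
    fix c s r s' r' j
    have Rl: "R (\<lambda>i. c * r i + r' i) = (\<lambda>j m. c * R r j m + R r' j m)"
      by (auto simp: R_def fun_eq_iff)
    show "Share (\<lambda>i. c * s i + s' i) (\<lambda>i. c * r i + r' i) j = (\<lambda>m. c * Share s r j m + Share s' r' j m)"
    proof
      fix m
      have "Share (\<lambda>i. c * s i + s' i) (\<lambda>i. c * r i + r' i) j m =
            c * R r j m + R r' j m + (\<Sum>i<l. (c * (s i - PP k b (g i) (R r)) + (s' i - PP k b (g i) (R r'))) * W 0 i j m)"
        unfolding Share_def Rl PP_lin by (simp add: algebra_simps)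
      also have "\<dots> = c * R r j m + R r' j m + (c * (\<Sum>i<l. (s i - PP k b (g i) (R r)) * W 0 i j m) + (\<Sum>i<l. (s' i - PP k b (g i) (R r')) * W 0 i j m))"
        by (simp add: sum.distrib sum_distrib_left distrib_right mult.assoc)
      also have "\<dots> = c * Share s r j m + Share s' r' j m"
        unfolding Share_def by (simp add: algebra_simps)
      finally show "Share (\<lambda>i. c * s i + s' i) (\<lambda>i. c * r i + r' i) j m = c * Share s r j m + Share s' r' j m" .
    qed
  qed
  have qual: "all_parties_qualified l e k (\<lambda>_. b) Share"
    unfolding all_parties_qualified_def
  proof (rule exI[of _ "\<lambda>i j m. g i j m"], intro allI impI)
    fix s r i assume "i < l"
    show "s i = (\<Sum>j<k. \<Sum>m<b. g i j m * Share s r j m)"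
      using PShare[OF \<open>i < l\<close>, of s r] by (simp add: PP_def)
  qed
  have cor: "\<exists>r \<in> fvec e. \<forall>j<k.
        \<phi> j (conv_input l k0 \<psi> y j) = Share (\<lambda>i. if i < l then \<Sum>v<k0. y i v else 0) r j" for y :: "nat \<Rightarrow> nat \<Rightarrow> 'f"
  proof -
    define s where "s = (\<lambda>i. if i < l then \<Sum>v<k0. y i v else 0)"
    define U where "U j m = (\<Sum>i<l. \<Sum>v<k0. y i v * W v i j m)" for j m
    define r where "r n = (if n < k * b then U (n div b) (n mod b) else 0)" for n
    have rf: "r \<in> fvec e" by (simp add: fvec_def r_def e_def)
    have RU: "R r = U"
    proof (intro ext)
      fix j m
      show "R r j m = U j m"
      proof (cases "j < k \<and> m < b")
        case True
        have "j * b + m < k * b"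
        proof -
          have "j * b + m < j * b + b" using True by simp
          also have "\<dots> = Suc j * b" by simp
          also have "\<dots> \<le> k * b" using True by (intro mult_right_mono) auto
          finally show ?thesis .
        qed
        then show ?thesis using True b0 by (simp add: R_def r_def)
      next
        case False
        then show ?thesis by (auto simp: R_def U_def W_def)
      qed
    qed
    have PU: "PP k b (g i) U = s i" if i: "i < l" for i
    proof -
      have "PP k b (g i) U = (\<Sum>i'<l. \<Sum>v<k0. y i' v * PP k b (g i) (W v i'))"
        unfolding U_def[abs_def] by (rule PP_sum2)
      also have "\<dots> = (\<Sum>i'<l. if i' = i then (\<Sum>v<k0. y i' v) else 0)"
        by (rule sum.cong[OF refl], rule trans[OF sum.cong[OF refl]])
           (auto simp: Wprop i)
      also have "\<dots> = s i" using i by (simp add: s_def)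
      finally show ?thesis .
    qed
    have SU: "Share s r = U"
    proof (intro ext)
      fix j m
      have "(\<Sum>i<l. (s i - PP k b (g i) (R r)) * W 0 i j m) = 0"
        by (rule sum.neutral) (simp add: RU PU)
      then show "Share s r j m = U j m" by (simp add: Share_def RU)
    qed
    have "\<phi> j (conv_input l k0 \<psi> y j) = U j" if j: "j < k" for j
    proof
      fix m
      show "\<phi> j (conv_input l k0 \<psi> y j) m = U j m"
        unfolding \<phi>_def U_def
        by (intro sum.cong refl) (auto simp: conv_input_def \<psi>_def W_def j)
    qed
    then show ?thesis using rf SU by (auto simp: s_def)
  qed
  have bbt: "black_box_transformation t k k0 l e (\<lambda>_. b) Share \<psi> \<phi>"
    unfolding black_box_transformation_def
  proof (intro conjI)
    show "lmsss_linear l e k (\<lambda>_. b) Share" by (rule lin)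
    show "all_parties_qualified l e k (\<lambda>_. b) Share" by (rule qual)
    show "\<forall>y :: nat \<Rightarrow> nat \<Rightarrow> 'f. \<exists>r \<in> fvec e. \<forall>j<k.
        \<phi> j (conv_input l k0 \<psi> y j) = Share (\<lambda>i. if i < l then \<Sum>v<k0. y i v else 0) r j"
      using cor by blast
    show "\<forall>i<l. \<forall>v<k0. \<psi> i v \<subseteq> {0..<k}" by (auto simp: \<psi>_def)
    show "\<forall>T \<subseteq> {0..<k}. card T \<le> t \<longrightarrow> (\<forall>i<l.
        card (\<Union>j\<in>T. {v. v < k0 \<and> j \<in> \<psi> i v}) \<le> k0 - 1)"
      unfolding \<psi>_def using priv_cond[OF tau _ _ tk] by blast
  qed
  have "\<forall>j<k. conv_input_len l k0 \<psi> j = l * ((k - 1) choose t)"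
    unfolding conv_input_len_def \<psi>_def using conv_len[OF tau] by blast
  with bbt show ?thesis unfolding k0_def by blast
qed

theorem mainTheorem12:
  fixes t k l b :: nat
  assumes "0 < t" "0 < k" "0 < l" "t < k"
    and "real b > real l / real k"
  shows "((\<exists>e (Share :: (nat \<Rightarrow> 'f::{field,finite}) \<Rightarrow> _) \<psi> \<phi>.
             black_box_transformation t k (k choose t) l e (\<lambda>_. b) Share \<psi> \<phi>)
          \<longleftrightarrow> (\<exists>C :: (nat \<Rightarrow> nat \<Rightarrow> 'f) set. linear_code k b C \<and>
                 code_rate k b C \<ge> real l / real (k * b) \<and> code_distance_ge k C (t + 1)))
       \<and> ((\<exists>C :: (nat \<Rightarrow> nat \<Rightarrow> 'f) set. linear_code k b C \<and>
                 code_rate k b C \<ge> real l / real (k * b) \<and> code_distance_ge k C (t + 1))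
          \<longrightarrow> (\<exists>e (Share :: (nat \<Rightarrow> 'f) \<Rightarrow> _) \<psi> \<phi>.
                 black_box_transformation t k (k choose t) l e (\<lambda>_. b) Share \<psi> \<phi> \<and>
                 (\<forall>j<k. conv_input_len l (k choose t) \<psi> j = l * ((k - 1) choose t))))"
proof -
  have b0: "0 < b"
  proof -
    have "0 < real l / real k" using assms(2,3) by simp
    with assms(5) show ?thesis by simp
  qed
  have tk: "t \<le> k" using assms(4) by simp
  have A: "(\<exists>C :: (nat \<Rightarrow> nat \<Rightarrow> 'f) set. linear_code k b C \<and>
                 code_rate k b C \<ge> real l / real (k * b) \<and> code_distance_ge k C (t + 1))
          \<longrightarrow> (\<exists>e (Share :: (nat \<Rightarrow> 'f) \<Rightarrow> _) \<psi> \<phi>.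
                 black_box_transformation t k (k choose t) l e (\<lambda>_. b) Share \<psi> \<phi> \<and>
                 (\<forall>j<k. conv_input_len l (k choose t) \<psi> j = l * ((k - 1) choose t)))"
    using if_dir[OF assms(3) tk b0 assms(2)] by blast
  have B: "(\<exists>e (Share :: (nat \<Rightarrow> 'f::{field,finite}) \<Rightarrow> _) \<psi> \<phi>.
             black_box_transformation t k (k choose t) l e (\<lambda>_. b) Share \<psi> \<phi>)
          \<longrightarrow> (\<exists>C :: (nat \<Rightarrow> nat \<Rightarrow> 'f) set. linear_code k b C \<and>
                 code_rate k b C \<ge> real l / real (k * b) \<and> code_distance_ge k C (t + 1))"
    using only_if_dir[OF tk] by blast
  from A B show ?thesis by blast
qed

end
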